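(* The labelling of the pointed partition posets ($\operatorname{Perm}$-partition posets) on $n$ elements, which labels the edge between $(A_1,\dots,A_p)$ and the pointed partition obtained by merging $A_i$ and $A_j$ by $(\max(\min A_i,\min A_j),\,a+n-p)$, where $a\in\{\min A_i,\min A_j\}$ is the minimal element of the part whose pointed element is not chosen as pointed element of $A_i\cup A_j$ (labels ordered lexicographically), is compatible with isomorphisms of subposets.
   Context: A pointed partition of $\{1,\dots,n\}$ is a set partition with one distinguished element in each part; they are ordered by refinement, where $A\le B$ requires moreover that each element pointed in $B$ is pointed in $A$. These are the partition posets of the basic-set operad $\operatorname{Perm}$, whose elements in arity $n$ are $e_{n,k}$, $1\le k\le n$, with $\gamma(e_{p,a};e_{k_1,b_1},\dots,e_{k_p,b_p})=e_{k_1+\dots+k_p,\,k_1+\dots+k_{a-1}+b_a}$. For a covering $\lambda\prec\omega$ merging parts $A_i,A_j$, $D_\lambda^\omega=\{\min A_i,\min A_j\}$ and $\delta_\lambda^\omega$ is the element of $\operatorname{Perm}$ on these two points recording which one carries the chosen pointed element; for general $\lambda\le\omega$, $D_\lambda^\omega$ is the set of minima of the parts of $\lambda$ contained in non-trivially merged parts of $\omega$, and $\delta^\omega_\lambda$ is the induced pointed partition of $D_\lambda^\omega$. Two interval subposets $\Pi_1,\Pi_2$ with $E_i=\bigcup_{\lambda\le\omega\in\Pi_i}D_\lambda^\omega$ are isomorphic if there is a poset isomorphism $g$ and an increasing bijection $f:E_1\to E_2$ with $\delta_{g(\lambda)}^{g(\omega)}=f(\delta_\lambda^\omega)$ for every covering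 $\lambda\prec\omega$. A family of labellings is compatible with isomorphisms of subposets if every such isomorphism induces a map on labels sending increasing chains to increasing chains, non-increasing chains to non-increasing chains, and preserving the lexicographic preorder on chains. *)

theory Defs
  imports Main
begin

text \<open>A pointed partition of {1..n} is represented as a set of pairs (block, pointed element).\<close>

definition pointed_partition :: "nat \<Rightarrow> (nat set \<times> nat) set \<Rightarrow> bool" where
  "pointed_partition n P \<longleftrightarrow>
     (\<forall>(S,a)\<in>P. a \<in> S) \<and>
     (\<forall>x\<in>P. \<forall>y\<in>P. x \<noteq> y \<longrightarrow> fst x \<inter> fst y = {}) \<and>
     \<Union> (fst ` P) = {1..n}"

definition PP :: "nat \<Rightarrow> (nat set \<times> nat) set set" where
  "PP n = {P. pointed_partition n P}"

definition pp_le :: "(nat set \<times> nat) set \<Rightarrow> (nat set \<times> nat) set \<Rightarrow> bool" where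
  "pp_le P Q \<longleftrightarrow> (\<forall>x\<in>P. \<exists>y\<in>Q. fst x \<subseteq> fst y) \<and> snd ` Q \<subseteq> snd ` P"

definition pp_covers :: "nat \<Rightarrow> (nat set \<times> nat) set \<Rightarrow> (nat set \<times> nat) set \<Rightarrow> bool" where
  "pp_covers n P Q \<longleftrightarrow> P \<in> PP n \<and> Q \<in> PP n \<and> pp_le P Q \<and> P \<noteq> Q \<and>
     \<not> (\<exists>R\<in>PP n. pp_le P R \<and> pp_le R Q \<and> R \<noteq> P \<and> R \<noteq> Q)"

definition pp_interval :: "nat \<Rightarrow> (nat set \<times> nat) set \<Rightarrow> (nat set \<times> nat) set \<Rightarrow> (nat set \<times> nat) set set" where
  "pp_interval n x y = {z \<in> PP n. pp_le x z \<and> pp_le z y}"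

definition Dset :: "(nat set \<times> nat) set \<Rightarrow> (nat set \<times> nat) set \<Rightarrow> nat set" where
  "Dset P Q = {Min S | S a. (S,a) \<in> P \<and>
      (\<exists>(T,b)\<in>Q. S \<subseteq> T \<and> (\<exists>(S',a')\<in>P. S' \<noteq> S \<and> S' \<subseteq> T))}"

definition delta :: "(nat set \<times> nat) set \<Rightarrow> (nat set \<times> nat) set \<Rightarrow> (nat set \<times> nat) set" where
  "delta P Q = {({Min S | S a. (S,a) \<in> P \<and> S \<subseteq> T}, Min (THE S. (S,b) \<in> P)) | T b.
      (T,b) \<in> Q \<and> (\<exists>(S,a)\<in>P. \<exists>(S',a')\<in>P. S \<noteq> S' \<and> S \<subseteq> T \<and> S' \<subseteq> T)}"

definition pp_image :: "(nat \<Rightarrow> nat) \<Rightarrow> (nat set \<times> nat) set \<Rightarrow> (nat set \<times> nat) set" where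
  "pp_image f P = (\<lambda>(S,a). (f ` S, f a)) ` P"

definition Eset :: "(nat set \<times> nat) set set \<Rightarrow> nat set" where
  "Eset Pi = \<Union> {Dset u v | u v. u \<in> Pi \<and> v \<in> Pi \<and> pp_le u v}"

definition subposet_iso ::
  "nat \<Rightarrow> (nat set \<times> nat) set set \<Rightarrow> nat \<Rightarrow> (nat set \<times> nat) set set \<Rightarrow>
   ((nat set \<times> nat) set \<Rightarrow> (nat set \<times> nat) set) \<Rightarrow> (nat \<Rightarrow> nat) \<Rightarrow> bool" where
  "subposet_iso n1 Pi1 n2 Pi2 g f \<longleftrightarrow>
     bij_betw g Pi1 Pi2 \<and>
     (\<forall>u\<in>Pi1. \<forall>v\<in>Pi1. pp_le u v \<longleftrightarrow> pp_le (g u) (g v)) \<and>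
     bij_betw f (Eset Pi1) (Eset Pi2) \<and> strict_mono_on (Eset Pi1) f \<and>
     (\<forall>u\<in>Pi1. \<forall>v\<in>Pi1. pp_covers n1 u v \<longrightarrow> delta (g u) (g v) = pp_image f (delta u v))"

definition pp_label :: "nat \<Rightarrow> (nat set \<times> nat) set \<Rightarrow> (nat set \<times> nat) set \<Rightarrow> nat \<times> nat" where
  "pp_label n P Q = (THE l. \<exists>S a T b c. (S,a) \<in> P \<and> (T,b) \<in> P \<and> S \<noteq> T \<and>
      c \<in> {a, b} \<and> Q = insert (S \<union> T, c) (P - {(S,a), (T,b)}) \<and>
      l = (max (Min S) (Min T), (if c = a then Min T else Min S) + n - card P))"

definition lab_less :: "nat \<times> nat \<Rightarrow> nat \<times> nat \<Rightarrow> bool" where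
  "lab_less l l' \<longleftrightarrow> fst l < fst l' \<or> (fst l = fst l' \<and> snd l < snd l')"

definition sat_chain :: "nat \<Rightarrow> (nat set \<times> nat) set set \<Rightarrow> (nat set \<times> nat) set list \<Rightarrow> bool" where
  "sat_chain n Pi cs \<longleftrightarrow> cs \<noteq> [] \<and> set cs \<subseteq> Pi \<and>
     (\<forall>i. Suc i < length cs \<longrightarrow> pp_covers n (cs ! i) (cs ! Suc i))"

definition chain_labels :: "nat \<Rightarrow> (nat set \<times> nat) set list \<Rightarrow> (nat \<times> nat) list" where
  "chain_labels n cs = map (\<lambda>i. pp_label n (cs ! i) (cs ! Suc i)) [0..<length cs - 1]"

definition increasing_chain :: "nat \<Rightarrow> (nat set \<times> nat) set list \<Rightarrow> bool" where
  "increasing_chain n cs \<longleftrightarrow> sorted_wrt lab_less (chain_labels n cs)"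

definition chain_lex_le :: "nat \<Rightarrow> (nat set \<times> nat) set list \<Rightarrow> (nat set \<times> nat) set list \<Rightarrow> bool" where
  "chain_lex_le n cs cs' \<longleftrightarrow>
     (let ls = chain_labels n cs; ls' = chain_labels n cs' in
      ls = ls' \<or> (\<exists>i < length ls. i < length ls' \<and> take i ls = take i ls' \<and> lab_less (ls ! i) (ls' ! i)))"

end

theory Submission
  imports Defs
begin


lemma ppD:
  assumes "P \<in> PP n"
  shows "\<And>S a. (S,a) \<in> P \<Longrightarrow> a \<in> S"
    and "\<And>x y. x \<in> P \<Longrightarrow> y \<in> P \<Longrightarrow> x \<noteq> y \<Longrightarrow> fst x \<inter> fst y = {}"
    and "\<Union> (fst ` P) = {1..n}"
  using assms unfolding PP_def pointed_partition_def by auto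

lemma pp_inj:
  assumes "P \<in> PP n" "(S,a) \<in> P" "(S',a') \<in> P" "x \<in> S" "x \<in> S'"
  shows "S = S' \<and> a = a'"
  using ppD(2)[OF assms(1) assms(2) assms(3)] assms(4,5) by auto

lemma pp_pt_inj:
  assumes "P \<in> PP n" "(S,a) \<in> P" "(S',a) \<in> P"
  shows "S = S'"
  using pp_inj[OF assms] ppD(1)[OF assms(1)] assms by blast

lemma pp_sub:
  assumes "P \<in> PP n" "(S,a) \<in> P"
  shows "S \<subseteq> {1..n}" "finite S" "S \<noteq> {}" "a \<in> S"
proof -
  show "S \<subseteq> {1..n}" using ppD(3)[OF assms(1)] assms(2) by force
  then show "finite S" by (rule finite_subset) simp
  show "a \<in> S" using ppD(1)[OF assms] .
  then show "S \<noteq> {}" by auto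
qed

lemma pp_finite_card:
  assumes "P \<in> PP n"
  shows "finite P" "card P \<le> n"
proof -
  have inj: "inj_on snd P"
    by (rule inj_onI) (metis assms pp_pt_inj prod.collapse)
  have sub: "snd ` P \<subseteq> {1..n}" using pp_sub(1,4)[OF assms] by force
  then have "finite (snd ` P)" by (rule finite_subset) simp
  then show "finite P" using inj finite_imageD by blast
  have "card P = card (snd ` P)" using card_image[OF inj] by simp
  also have "\<dots> \<le> card {1..n}" using sub by (intro card_mono) auto
  finally show "card P \<le> n" by simp
qed

lemma pp_le_trans: "pp_le P Q \<Longrightarrow> pp_le Q R \<Longrightarrow> pp_le P R"
  unfolding pp_le_def by (meson dual_order.trans subset_trans)

lemma cover_is_merge:
  assumes "pp_covers n u v"
  shows "\<exists>S a T b. (S,a) \<in> u \<and> (T,b) \<in> u \<and> S \<noteq> T \<and>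
     v = insert (S \<union> T, a) (u - {(S,a),(T,b)})"
proof -
  have u: "u \<in> PP n" and v: "v \<in> PP n" and le: "pp_le u v" and ne: "u \<noteq> v"
    and nor: "\<And>R. R \<in> PP n \<Longrightarrow> pp_le u R \<Longrightarrow> pp_le R v \<Longrightarrow> R \<noteq> u \<Longrightarrow> R = v"
    using assms unfolding pp_covers_def by blast+
  have le1: "\<And>X c. (X,c) \<in> u \<Longrightarrow> \<exists>T b. (T,b) \<in> v \<and> X \<subseteq> T"
    using le unfolding pp_le_def by force
  have le2: "\<And>T b. (T,b) \<in> v \<Longrightarrow> \<exists>S0. (S0,b) \<in> u"
    using le unfolding pp_le_def by force
  have ptin: "\<And>T b S0. (T,b) \<in> v \<Longrightarrow> (S0,b) \<in> u \<Longrightarrow> S0 \<subseteq> T"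
  proof -
    fix T b S0 assume a1: "(T,b) \<in> v" and a2: "(S0,b) \<in> u"
    obtain T' b' where "(T',b') \<in> v" "S0 \<subseteq> T'" using le1[OF a2] by blast
    moreover have "b \<in> S0" using pp_sub(4)[OF u a2] .
    moreover have "b \<in> T" using pp_sub(4)[OF v a1] .
    ultimately show "S0 \<subseteq> T" using pp_inj[OF v a1] by blast
  qed
  have "\<exists>T b S1 a1. (T,b) \<in> v \<and> (S1,a1) \<in> u \<and> S1 \<subseteq> T \<and> b \<notin> S1"
  proof (rule ccontr)
    assume H: "\<not> ?thesis"
    have vu: "(T,b) \<in> u" if tb: "(T,b) \<in> v" for T b
    proof -
      obtain S0 where s0: "(S0,b) \<in> u" using le2[OF tb] by blast
      have "S0 \<subseteq> T" using ptin[OF tb s0] .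
      moreover have "T \<subseteq> S0"
      proof
        fix x assume xT: "x \<in> T"
        have "x \<in> {1..n}" using pp_sub(1)[OF v tb] xT by blast
        then have "x \<in> \<Union> (fst ` u)" using ppD(3)[OF u] by simp
        then obtain X c where xc: "(X,c) \<in> u" "x \<in> X" by auto
        obtain T'' b'' where t'': "(T'',b'') \<in> v" "X \<subseteq> T''" using le1[OF xc(1)] by blast
        have "T'' = T" using pp_inj[OF v t''(1) tb, of x] t''(2) xc(2) xT by blast
        then have "X \<subseteq> T" using t'' by simp
        then have "b \<in> X" using H tb xc(1) by blast
        then have "X = S0" using pp_inj[OF u xc(1) s0, of b] pp_sub(4)[OF u s0] by blast
        then show "x \<in> S0" using xc by simp
      qed
      ultimately show ?thesis using s0 by simp
    qed
    have uv: "(X,c) \<in> v" if xc: "(X,c) \<in> u" for X c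
    proof -
      obtain T b where tb: "(T,b) \<in> v" "X \<subseteq> T" using le1[OF xc] by blast
      have "b \<in> X" using H tb xc by blast
      moreover have "(T,b) \<in> u" using vu[OF tb(1)] .
      ultimately have "X = T \<and> c = b" using pp_inj[OF u xc, of T b b] pp_sub(4)[OF v tb(1)] by blast
      then show ?thesis using tb by simp
    qed
    have "u = v" using vu uv by auto
    then show False using ne by simp
  qed
  then obtain T b S1 a1 where tb: "(T,b) \<in> v" and s1: "(S1,a1) \<in> u" and s1T: "S1 \<subseteq> T"
    and bS1: "b \<notin> S1" by blast
  obtain S0 where s0: "(S0,b) \<in> u" using le2[OF tb] by blast
  have s0T: "S0 \<subseteq> T" using ptin[OF tb s0] .
  have bS0: "b \<in> S0" using pp_sub(4)[OF u s0] .
  have a1S1: "a1 \<in> S1" using pp_sub(4)[OF u s1] .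
  have neq: "S0 \<noteq> S1" using bS0 bS1 by blast
  have disj: "S0 \<inter> S1 = {}" using ppD(2)[OF u s0 s1] neq by auto
  define R where "R = insert (S0 \<union> S1, b) (u - {(S0,b),(S1,a1)})"
  have other_disj: "X \<inter> S0 = {} \<and> X \<inter> S1 = {}" if "(X,c) \<in> u" "(X,c) \<noteq> (S0,b)" "(X,c) \<noteq> (S1,a1)" for X c
    using ppD(2)[OF u that(1) s0] ppD(2)[OF u that(1) s1] that by auto
  have RPP: "R \<in> PP n"
    unfolding PP_def pointed_partition_def
  proof (intro CollectI conjI)
    show "\<forall>(S,a)\<in>R. a \<in> S" using ppD(1)[OF u] bS0 unfolding R_def by auto
    have md: "fst (S0 \<union> S1, b) \<inter> fst y = {} \<and> fst y \<inter> fst (S0 \<union> S1, b) = {}"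
      if "y \<in> u - {(S0,b),(S1,a1)}" for y
    proof -
      obtain Y c where y: "y = (Y,c)" by fastforce
      show ?thesis using other_disj[of Y c] that unfolding y by auto
    qed
    show "\<forall>x\<in>R. \<forall>y\<in>R. x \<noteq> y \<longrightarrow> fst x \<inter> fst y = {}"
    proof (intro ballI impI)
      fix x y assume xR: "x \<in> R" and yR: "y \<in> R" and xy: "x \<noteq> y"
      show "fst x \<inter> fst y = {}"
      proof (cases "x = (S0 \<union> S1, b)")
        case True
        then have "y \<in> u - {(S0,b),(S1,a1)}" using yR xy unfolding R_def by blast
        then show ?thesis using md True by blast
      next
        case False
        then have xu: "x \<in> u - {(S0,b),(S1,a1)}" using xR unfolding R_def by blast
        show ?thesis
        proof (cases "y = (S0 \<union> S1, b)")
          case True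
          then show ?thesis using md xu by blast
        next
          case False
          then have "y \<in> u" using yR unfolding R_def by blast
          then show ?thesis using ppD(2)[OF u] xu xy by blast
        qed
      qed
    qed
    have "\<Union> (fst ` R) = \<Union> (fst ` u)"
    proof
      show "\<Union> (fst ` R) \<subseteq> \<Union> (fst ` u)"
      proof
        fix x assume "x \<in> \<Union> (fst ` R)"
        then obtain r where r: "r \<in> R" "x \<in> fst r" by blast
        show "x \<in> \<Union> (fst ` u)"
        proof (cases "r = (S0 \<union> S1, b)")
          case True
          then have "x \<in> S0 \<or> x \<in> S1" using r by simp
          then show ?thesis using s0 s1 by (metis UnionI fst_conv image_eqI)
        next
          case False
          then have "r \<in> u" using r unfolding R_def by blast
          then show ?thesis using r by blast
        qed
      qed
      show "\<Union> (fst ` u) \<subseteq> \<Union> (fst ` R)"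
      proof
        fix x assume "x \<in> \<Union> (fst ` u)"
        then obtain X c where xc: "(X,c) \<in> u" "x \<in> X" by auto
        show "x \<in> \<Union> (fst ` R)"
        proof (cases "(X,c) \<in> {(S0,b),(S1,a1)}")
          case True
          then have "x \<in> fst (S0 \<union> S1, b)" using xc by auto
          moreover have "(S0 \<union> S1, b) \<in> R" unfolding R_def by simp
          ultimately show ?thesis by blast
        next
          case False
          then have "(X,c) \<in> R" using xc unfolding R_def by blast
          then show ?thesis using xc by force
        qed
      qed
    qed
    then show "\<Union> (fst ` R) = {1..n}" using ppD(3)[OF u] by simp
  qed
  have MR: "(S0 \<union> S1, b) \<in> R" unfolding R_def by simp
  have Ru: "r \<in> u" if "r \<in> R" "r \<noteq> (S0 \<union> S1, b)" for r
    using that unfolding R_def by blast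
  have leuR: "pp_le u R"
    unfolding pp_le_def
  proof (intro conjI ballI)
    fix x assume xu: "x \<in> u"
    show "\<exists>y\<in>R. fst x \<subseteq> fst y"
    proof (cases "x \<in> {(S0,b),(S1,a1)}")
      case True
      then have "fst x \<subseteq> fst (S0 \<union> S1, b)" by auto
      then show ?thesis using MR by blast
    next
      case False
      then have "x \<in> R" using xu unfolding R_def by blast
      then show ?thesis by blast
    qed
  next
    show "snd ` R \<subseteq> snd ` u"
    proof
      fix c assume "c \<in> snd ` R"
      then obtain r where r: "r \<in> R" "c = snd r" by blast
      show "c \<in> snd ` u"
      proof (cases "r = (S0 \<union> S1, b)")
        case True
        then have "c = snd (S0,b)" using r by simp
        then show ?thesis using s0 by blast
      next
        case False
        then show ?thesis using Ru r by blast
      qed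
    qed
  qed
  have leRv: "pp_le R v"
    unfolding pp_le_def
  proof (intro conjI)
    show "\<forall>x\<in>R. \<exists>y\<in>v. fst x \<subseteq> fst y"
    proof
      fix x assume xR: "x \<in> R"
      show "\<exists>y\<in>v. fst x \<subseteq> fst y"
      proof (cases "x = (S0 \<union> S1, b)")
        case True
        then have "fst x \<subseteq> fst (T,b)" using s0T s1T by simp
        then show ?thesis using tb by blast
      next
        case False
        then have xu: "x \<in> u" using Ru xR by blast
        obtain X c where xe: "x = (X,c)" by fastforce
        obtain T' b' where "(T',b') \<in> v" "X \<subseteq> T'" using le1[of X c] xu unfolding xe by blast
        then show ?thesis unfolding xe by (metis fst_conv)
      qed
    qed
    show "snd ` v \<subseteq> snd ` R"
    proof
      fix c assume "c \<in> snd ` v"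
      then obtain T' where t': "(T',c) \<in> v" by force
      obtain X where xc: "(X,c) \<in> u" using le2[OF t'] by blast
      show "c \<in> snd ` R"
      proof (cases "(X,c) = (S1,a1)")
        case True
        then have "c \<in> T" using a1S1 s1T by auto
        moreover have "c \<in> T'" using pp_sub(4)[OF v t'] .
        ultimately have "b = c" using pp_inj[OF v t' tb, of c] by blast
        then show ?thesis using True bS1 a1S1 by simp
      next
        case False
        show ?thesis
        proof (cases "(X,c) = (S0,b)")
          case True
          then have "c = snd (S0 \<union> S1, b)" by simp
          then show ?thesis using MR by blast
        next
          case False2: False
          then have "(X,c) \<in> R" using False xc unfolding R_def by blast
          then show ?thesis by force
        qed
      qed
    qed
  qed
  have "R \<noteq> u"
  proof
    assume "R = u"
    then have "(S0 \<union> S1, b) \<in> u" unfolding R_def by auto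
    then have "S0 \<union> S1 = S0" using pp_inj[OF u _ s0, of "S0 \<union> S1" b b] bS0 by blast
    then show False using disj pp_sub(3)[OF u s1] by blast
  qed
  then have "R = v" by (rule nor[OF RPP leuR leRv])
  then have vR: "v = R" by (rule sym)
  then have "v = insert (S0 \<union> S1, b) (u - {(S0,b),(S1,a1)})" unfolding R_def .
  then show ?thesis using s0 s1 neq by (intro exI[of _ S0] exI[of _ b] exI[of _ S1] exI[of _ a1]) simp
qed

lemma merge_diff:
  assumes u: "u \<in> PP n" and s: "(S,a) \<in> u" and t: "(T,b) \<in> u" and ST: "S \<noteq> T"
    and v: "v = insert (S \<union> T, c) (u - {(S,a),(T,b)})"
  shows "u - v = {(S,a),(T,b)}" "v - u = {(S \<union> T, c)}"
proof -
  have "(S \<union> T, c) \<notin> u"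
  proof
    assume h: "(S \<union> T, c) \<in> u"
    have "a \<in> S" using pp_sub(4)[OF u s] .
    then have "S \<union> T = S" using pp_inj[OF u h s, of a] by blast
    moreover have "b \<in> T" using pp_sub(4)[OF u t] .
    ultimately have "S = T" using pp_inj[OF u s t, of b] by blast
    then show False using ST by simp
  qed
  then show "u - v = {(S,a),(T,b)}" "v - u = {(S \<union> T, c)}"
    using s t unfolding v by auto
qed

lemma DsetI:
  assumes "(S,a) \<in> u" "(T0,b0) \<in> v" "S \<subseteq> T0" "(S2,a2) \<in> u" "S2 \<noteq> S" "S2 \<subseteq> T0"
  shows "Min S \<in> Dset u v"
  unfolding Dset_def using assms by blast

lemma merge_props:
  assumes u: "u \<in> PP n" and s: "(S,a) \<in> u" and t: "(T,b) \<in> u" and ST: "S \<noteq> T"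
    and v: "v = insert (S \<union> T, a) (u - {(S,a),(T,b)})"
  shows "pp_label n u v = (max (Min S) (Min T), Min T + n - card u)"
    and "delta u v = {({Min S, Min T}, Min S)}"
    and "card u = Suc (card v)"
    and "Min S \<in> Dset u v" "Min T \<in> Dset u v" "Min S \<noteq> Min T"
proof -
  have aS: "a \<in> S" using pp_sub(4)[OF u s] .
  have bT: "b \<in> T" using pp_sub(4)[OF u t] .
  have "(S,a) \<noteq> (T,b)" using ST by simp
  then have disj: "S \<inter> T = {}" using ppD(2)[OF u s t] by simp
  have fS: "finite S" "S \<noteq> {}" using pp_sub(2,3)[OF u s] by simp_all
  have fT: "finite T" "T \<noteq> {}" using pp_sub(2,3)[OF u t] by simp_all
  have mS: "Min S \<in> S" by (rule Min_in[OF fS])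
  have mT: "Min T \<in> T" by (rule Min_in[OF fT])
  have ab: "a \<noteq> b" using aS bT disj by blast
  have d: "u - v = {(S,a),(T,b)}" "v - u = {(S \<union> T, a)}"
    by (rule merge_diff[OF u s t ST v])+
  show "Min S \<noteq> Min T"
  proof
    assume "Min S = Min T"
    then have "Min S \<in> S \<inter> T" using mS mT by simp
    then show False using disj by simp
  qed
  show "pp_label n u v = (max (Min S) (Min T), Min T + n - card u)"
    unfolding pp_label_def
  proof (rule the_equality)
    show "\<exists>S' a' T' b' c. (S',a') \<in> u \<and> (T',b') \<in> u \<and> S' \<noteq> T' \<and>
      c \<in> {a', b'} \<and> v = insert (S' \<union> T', c) (u - {(S',a'), (T',b')}) \<and>
      (max (Min S) (Min T), Min T + n - card u) = (max (Min S') (Min T'), (if c = a' then Min T' else Min S') + n - card u)"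
      using s t ST v by (intro exI[of _ S] exI[of _ a] exI[of _ T] exI[of _ b] exI[of _ a]) simp
  next
    fix l assume "\<exists>S' a' T' b' c. (S',a') \<in> u \<and> (T',b') \<in> u \<and> S' \<noteq> T' \<and>
      c \<in> {a', b'} \<and> v = insert (S' \<union> T', c) (u - {(S',a'), (T',b')}) \<and>
      l = (max (Min S') (Min T'), (if c = a' then Min T' else Min S') + n - card u)"
    then obtain S' a' T' b' c where s': "(S',a') \<in> u" and t': "(T',b') \<in> u" and ST': "S' \<noteq> T'"
      and c: "c \<in> {a', b'}" and v': "v = insert (S' \<union> T', c) (u - {(S',a'), (T',b')})"
      and l: "l = (max (Min S') (Min T'), (if c = a' then Min T' else Min S') + n - card u)"
      by blast
    have d': "u - v = {(S',a'),(T',b')}" "v - u = {(S' \<union> T', c)}" using merge_diff[OF u s' t' ST' v'] by auto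
    have ca: "c = a" using d d' by auto
    have "{(S',a'),(T',b')} = {(S,a),(T,b)}" using d d' by simp
    then have "((S',a') = (S,a) \<and> (T',b') = (T,b)) \<or> ((S',a') = (T,b) \<and> (T',b') = (S,a))"
      by (simp add: doubleton_eq_iff)
    then show "l = (max (Min S) (Min T), Min T + n - card u)"
    proof
      assume "(S',a') = (S,a) \<and> (T',b') = (T,b)"
      then show ?thesis using l ca by auto
    next
      assume h: "(S',a') = (T,b) \<and> (T',b') = (S,a)"
      then have "c \<noteq> a'" using ca ab by auto
      then show ?thesis using l h by (auto simp: max.commute)
    qed
  qed
  have finu: "finite u" using pp_finite_card(1)[OF u] .
  have nin: "(S \<union> T, a) \<notin> u - {(S,a),(T,b)}" using d(2) by blast
  have "card v = Suc (card (u - {(S,a),(T,b)}))"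
    unfolding v using finu nin by (simp add: card_insert_disjoint)
  also have "card (u - {(S,a),(T,b)}) = card u - 2"
    using s t ST finu by (subst card_Diff_subset) auto
  finally have cv: "card v = Suc (card u - 2)" .
  have "card {(S,a),(T,b)} \<le> card u" using s t finu by (intro card_mono) auto
  then have "2 \<le> card u" using ST by simp
  then show "card u = Suc (card v)" using cv by simp
  have inB: "(S \<union> T, a) \<in> v" unfolding v by simp
  show "Min S \<in> Dset u v" by (rule DsetI[OF s inB _ t]) (use ST in auto)
  show "Min T \<in> Dset u v" by (rule DsetI[OF t inB _ s]) (use ST in auto)
  have blocks: "X = S \<or> X = T" if xc: "(X,c) \<in> u" and sub: "X \<subseteq> S \<union> T" for X c
  proof -
    obtain x where x: "x \<in> X" using pp_sub(3)[OF u xc] by blast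
    then have "x \<in> S \<or> x \<in> T" using sub by blast
    then show ?thesis
    proof
      assume "x \<in> S" then show ?thesis using pp_inj[OF u xc s x] by simp
    next
      assume "x \<in> T" then show ?thesis using pp_inj[OF u xc t x] by simp
    qed
  qed
  have cond: "((T',b') \<in> v \<and> (\<exists>(S1,a1)\<in>u. \<exists>(S2,a2)\<in>u. S1 \<noteq> S2 \<and> S1 \<subseteq> T' \<and> S2 \<subseteq> T'))
     \<longleftrightarrow> (T',b') = (S \<union> T, a)" for T' b'
  proof
    assume h: "(T',b') \<in> v \<and> (\<exists>(S1,a1)\<in>u. \<exists>(S2,a2)\<in>u. S1 \<noteq> S2 \<and> S1 \<subseteq> T' \<and> S2 \<subseteq> T')"
    show "(T',b') = (S \<union> T, a)"
    proof (rule ccontr)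
      assume nn: "(T',b') \<noteq> (S \<union> T, a)"
      then have tu: "(T',b') \<in> u" using h unfolding v by blast
      from h have "\<exists>(S1,a1)\<in>u. \<exists>(S2,a2)\<in>u. S1 \<noteq> S2 \<and> S1 \<subseteq> T' \<and> S2 \<subseteq> T'" by (rule conjunct2)
      then obtain p1 where p1: "p1 \<in> u" "case p1 of (S1,a1) \<Rightarrow> \<exists>(S2,a2)\<in>u. S1 \<noteq> S2 \<and> S1 \<subseteq> T' \<and> S2 \<subseteq> T'"
        by (rule bexE)
      obtain S1 a1 where p1e: "p1 = (S1,a1)" by (cases p1)
      have "\<exists>(S2,a2)\<in>u. S1 \<noteq> S2 \<and> S1 \<subseteq> T' \<and> S2 \<subseteq> T'" using p1(2) unfolding p1e by simp
      then obtain p2 where p2: "p2 \<in> u" "case p2 of (S2,a2) \<Rightarrow> S1 \<noteq> S2 \<and> S1 \<subseteq> T' \<and> S2 \<subseteq> T'"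
        by (rule bexE)
      obtain S2 a2 where p2e: "p2 = (S2,a2)" by (cases p2)
      have h2: "(S1,a1) \<in> u" "(S2,a2) \<in> u" "S1 \<noteq> S2" "S1 \<subseteq> T'" "S2 \<subseteq> T'"
        using p1(1) p2 unfolding p1e p2e by simp_all
      obtain x1 where x1: "x1 \<in> S1" using pp_sub(3)[OF u h2(1)] by blast
      obtain x2 where x2: "x2 \<in> S2" using pp_sub(3)[OF u h2(2)] by blast
      have "x1 \<in> T'" using x1 h2(4) by blast
      then have "S1 = T'" using pp_inj[OF u h2(1) tu x1] by simp
      moreover have "x2 \<in> T'" using x2 h2(5) by blast
      then have "S2 = T'" using pp_inj[OF u h2(2) tu x2] by simp
      ultimately show False using h2(3) by simp
    qed
  next
    assume eq: "(T',b') = (S \<union> T, a)"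
    have "\<exists>(S1,a1)\<in>u. \<exists>(S2,a2)\<in>u. S1 \<noteq> S2 \<and> S1 \<subseteq> S \<union> T \<and> S2 \<subseteq> S \<union> T"
    proof (rule bexI[where x="(S,a)"])
      show "(S,a) \<in> u" by (rule s)
      have "\<exists>(S2,a2)\<in>u. S \<noteq> S2 \<and> S \<subseteq> S \<union> T \<and> S2 \<subseteq> S \<union> T"
        by (rule bexI[where x="(T,b)"]) (simp_all add: ST t)
      then show "case (S,a) of (S1,a1) \<Rightarrow> \<exists>(S2,a2)\<in>u. S1 \<noteq> S2 \<and> S1 \<subseteq> S \<union> T \<and> S2 \<subseteq> S \<union> T"
        by simp
    qed
    then show "(T',b') \<in> v \<and> (\<exists>(S1,a1)\<in>u. \<exists>(S2,a2)\<in>u. S1 \<noteq> S2 \<and> S1 \<subseteq> T' \<and> S2 \<subseteq> T')"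
      using inB eq by simp
  qed
  have mins: "{Min X | X c. (X,c) \<in> u \<and> X \<subseteq> S \<union> T} = {Min S, Min T}"
  proof (intro equalityI subsetI)
    fix m assume "m \<in> {Min X | X c. (X,c) \<in> u \<and> X \<subseteq> S \<union> T}"
    then obtain X c where "m = Min X" "(X,c) \<in> u" "X \<subseteq> S \<union> T" by blast
    then show "m \<in> {Min S, Min T}" using blocks by blast
  next
    fix m assume "m \<in> {Min S, Min T}"
    then show "m \<in> {Min X | X c. (X,c) \<in> u \<and> X \<subseteq> S \<union> T}"
    proof
      assume "m = Min S" then show ?thesis using s by blast
    next
      assume "m \<in> {Min T}" then show ?thesis using t by blast
    qed
  qed
  have the1: "(THE X. (X,a) \<in> u) = S"
  proof (rule the_equality)
    show "(S,a) \<in> u" by (rule s)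
    fix X assume "(X,a) \<in> u" then show "X = S" by (rule pp_pt_inj[OF u _ s])
  qed
  show "delta u v = {({Min S, Min T}, Min S)}"
  proof (intro equalityI subsetI)
    fix z assume "z \<in> delta u v"
    then obtain T' b' where z: "z = ({Min X | X c. (X,c) \<in> u \<and> X \<subseteq> T'}, Min (THE X. (X,b') \<in> u))"
      and c1: "(T',b') \<in> v" and c2: "\<exists>(S1,a1)\<in>u. \<exists>(S2,a2)\<in>u. S1 \<noteq> S2 \<and> S1 \<subseteq> T' \<and> S2 \<subseteq> T'"
      unfolding delta_def by blast
    have "(T',b') = (S \<union> T, a)" using cond[of T' b'] c1 c2 by blast
    then have "T' = S \<union> T" "b' = a" by auto
    then show "z \<in> {({Min S, Min T}, Min S)}" using z mins the1 by simp
  next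
    fix z assume "z \<in> {({Min S, Min T}, Min S)}"
    then have z: "z = ({Min X | X c. (X,c) \<in> u \<and> X \<subseteq> S \<union> T}, Min (THE X. (X,a) \<in> u))"
      using mins the1 by simp
    have "(S \<union> T, a) \<in> v \<and> (\<exists>(S1,a1)\<in>u. \<exists>(S2,a2)\<in>u. S1 \<noteq> S2 \<and> S1 \<subseteq> S \<union> T \<and> S2 \<subseteq> S \<union> T)"
      using cond[of "S \<union> T" a] by simp
    then show "z \<in> delta u v" unfolding delta_def z by blast
  qed
qed



lemma cover_info:
  assumes c: "pp_covers n u v"
  shows "\<exists>m1 m2. m1 \<noteq> m2 \<and> delta u v = {({m1,m2},m1)} \<and>
     pp_label n u v = (max m1 m2, m2 + (n - card u)) \<and> m1 \<in> Dset u v \<and> m2 \<in> Dset u v \<and>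
     card u = Suc (card v) \<and> card u \<le> n"
proof -
  have u: "u \<in> PP n" using c unfolding pp_covers_def by blast
  obtain S a T b where s: "(S,a) \<in> u" and t: "(T,b) \<in> u" and ST: "S \<noteq> T"
    and v: "v = insert (S \<union> T, a) (u - {(S,a),(T,b)})"
    using cover_is_merge[OF c] by blast
  note mp = merge_props[OF u s t ST v]
  have cu: "card u \<le> n" by (rule pp_finite_card(2)[OF u])
  have "Min T + n - card u = Min T + (n - card u)" using cu by simp
  then show ?thesis using mp cu by (intro exI[of _ "Min S"] exI[of _ "Min T"]) simp
qed

lemma Eset_I:
  assumes "u \<in> Pi" "v \<in> Pi" "pp_le u v" "m \<in> Dset u v"
  shows "m \<in> Eset Pi"
  unfolding Eset_def using assms by blast

lemma iso_cover:
  assumes iso: "subposet_iso n1 (pp_interval n1 x1 y1) n2 (pp_interval n2 x2 y2) g f"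
    and uI: "u \<in> pp_interval n1 x1 y1" and vI: "v \<in> pp_interval n1 x1 y1"
    and c: "pp_covers n1 u v"
  shows "pp_covers n2 (g u) (g v)"
proof -
  let ?I1 = "pp_interval n1 x1 y1" and ?I2 = "pp_interval n2 x2 y2"
  have bij: "bij_betw g ?I1 ?I2" and ord: "\<And>u v. u \<in> ?I1 \<Longrightarrow> v \<in> ?I1 \<Longrightarrow> pp_le u v \<longleftrightarrow> pp_le (g u) (g v)"
    using iso unfolding subposet_iso_def by blast+
  have guI: "g u \<in> ?I2" using bij uI by (meson bij_betwE)
  have gvI: "g v \<in> ?I2" using bij vI by (meson bij_betwE)
  have le: "pp_le u v" and ne: "u \<noteq> v"
    and nor: "\<And>R. R \<in> PP n1 \<Longrightarrow> pp_le u R \<Longrightarrow> pp_le R v \<Longrightarrow> R \<noteq> u \<Longrightarrow> R \<noteq> v \<Longrightarrow> False"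
    using c unfolding pp_covers_def by blast+
  have gle: "pp_le (g u) (g v)" using ord[OF uI vI] le by simp
  have gne: "g u \<noteq> g v"
  proof
    assume "g u = g v"
    then have "u = v" using bij uI vI unfolding bij_betw_def inj_on_def by blast
    then show False using ne by simp
  qed
  have nor2: False if R: "R \<in> PP n2" "pp_le (g u) R" "pp_le R (g v)" "R \<noteq> g u" "R \<noteq> g v" for R
  proof -
    have "pp_le x2 (g u)" "pp_le (g v) y2" using guI gvI unfolding pp_interval_def by blast+
    then have "pp_le x2 R" "pp_le R y2" using R pp_le_trans by blast+
    then have "R \<in> ?I2" using R unfolding pp_interval_def by blast
    then obtain w where w: "w \<in> ?I1" "R = g w" using bij unfolding bij_betw_def by blast
    have "pp_le u w" using ord[OF uI w(1)] R w by simp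
    moreover have "pp_le w v" using ord[OF w(1) vI] R w by simp
    moreover have "w \<noteq> u" "w \<noteq> v" using R w by auto
    moreover have "w \<in> PP n1" using w unfolding pp_interval_def by blast
    ultimately show False using nor by blast
  qed
  show ?thesis unfolding pp_covers_def
    using guI gvI gle gne nor2 unfolding pp_interval_def by blast
qed

lemma edge:
  assumes iso: "subposet_iso n1 (pp_interval n1 x1 y1) n2 (pp_interval n2 x2 y2) g f"
    and uI: "u \<in> pp_interval n1 x1 y1" and vI: "v \<in> pp_interval n1 x1 y1"
    and c: "pp_covers n1 u v"
  shows "\<exists>m1 m2. m1 \<in> Eset (pp_interval n1 x1 y1) \<and> m2 \<in> Eset (pp_interval n1 x1 y1) \<and>
    pp_label n1 u v = (max m1 m2, m2 + (n1 - card u)) \<and>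
    pp_label n2 (g u) (g v) = (max (f m1) (f m2), f m2 + (n2 - card (g u))) \<and>
    card u = Suc (card v) \<and> card (g u) = Suc (card (g v)) \<and> card u \<le> n1 \<and> card (g u) \<le> n2"
proof -
  have c2: "pp_covers n2 (g u) (g v)" by (rule iso_cover[OF iso uI vI c])
  obtain m1 m2 where m: "m1 \<noteq> m2" "delta u v = {({m1,m2},m1)}"
     "pp_label n1 u v = (max m1 m2, m2 + (n1 - card u))" "m1 \<in> Dset u v" "m2 \<in> Dset u v"
     "card u = Suc (card v)" "card u \<le> n1"
    using cover_info[OF c] by blast
  obtain k1 k2 where k: "k1 \<noteq> k2" "delta (g u) (g v) = {({k1,k2},k1)}"
     "pp_label n2 (g u) (g v) = (max k1 k2, k2 + (n2 - card (g u)))"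
     "card (g u) = Suc (card (g v))" "card (g u) \<le> n2"
    using cover_info[OF c2] by blast
  have "delta (g u) (g v) = pp_image f (delta u v)"
    using iso uI vI c unfolding subposet_iso_def by blast
  also have "\<dots> = {({f m1, f m2}, f m1)}" unfolding m(2) pp_image_def by simp
  finally have dd: "delta (g u) (g v) = {({f m1, f m2}, f m1)}" .
  have "{({k1,k2},k1)} = {({f m1, f m2}, f m1)}" using dd unfolding k(2) .
  then have kk0: "({k1,k2},k1) = ({f m1, f m2}, f m1)" by (rule singleton_inject)
  then have k1: "k1 = f m1" and kk: "{k1,k2} = {f m1, f m2}" unfolding prod.inject by blast+
  have k2: "k2 = f m2" using kk k1 k(1) by (auto simp: doubleton_eq_iff)
  have le: "pp_le u v" using c unfolding pp_covers_def by blast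
  have E: "m1 \<in> Eset (pp_interval n1 x1 y1)" "m2 \<in> Eset (pp_interval n1 x1 y1)"
    using Eset_I[OF uI vI le] m(4,5) by auto
  show ?thesis using E m k k1 k2 by blast
qed



lemma chain_labels_len: "length (chain_labels n cs) = length cs - 1"
  by (simp add: chain_labels_def)

lemma chain_labels_nth: "i < length cs - 1 \<Longrightarrow> chain_labels n cs ! i = pp_label n (cs!i) (cs!Suc i)"
  by (simp add: chain_labels_def)

lemma card_chain:
  assumes "\<And>j. Suc j < length cs \<Longrightarrow> h (cs!j) = Suc (h (cs!Suc j))"
  shows "i < length cs \<Longrightarrow> h (cs!0) = h (cs!i) + i"
proof (induction i)
  case 0 then show ?case by simp
next
  case (Suc i)
  then have "h (cs!0) = h (cs!i) + i" by simp
  moreover have "h (cs!i) = Suc (h (cs!Suc i))" using assms Suc.prems by blast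
  ultimately show ?case by simp
qed

lemma label_at:
  assumes iso: "subposet_iso n1 (pp_interval n1 x1 y1) n2 (pp_interval n2 x2 y2) g f"
    and sat: "sat_chain n1 (pp_interval n1 x1 y1) cs" and i: "Suc i < length cs"
  shows "\<exists>m1 m2. m1 \<in> Eset (pp_interval n1 x1 y1) \<and> m2 \<in> Eset (pp_interval n1 x1 y1) \<and>
    chain_labels n1 cs ! i = (max m1 m2, m2 + (n1 - card (hd cs)) + i) \<and>
    chain_labels n2 (map g cs) ! i = (max (f m1) (f m2), f m2 + (n2 - card (g (hd cs))) + i)"
proof -
  let ?I1 = "pp_interval n1 x1 y1" and ?I2 = "pp_interval n2 x2 y2"
  have ne: "cs \<noteq> []" and sub: "set cs \<subseteq> ?I1"
    and cov: "\<And>j. Suc j < length cs \<Longrightarrow> pp_covers n1 (cs!j) (cs!Suc j)"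
    using sat unfolding sat_chain_def by blast+
  have mem: "\<And>j. j < length cs \<Longrightarrow> cs!j \<in> ?I1" using sub nth_mem by blast
  have E: "\<And>j. Suc j < length cs \<Longrightarrow> \<exists>m1 m2. m1 \<in> Eset ?I1 \<and> m2 \<in> Eset ?I1 \<and>
    pp_label n1 (cs!j) (cs!Suc j) = (max m1 m2, m2 + (n1 - card (cs!j))) \<and>
    pp_label n2 (g (cs!j)) (g (cs!Suc j)) = (max (f m1) (f m2), f m2 + (n2 - card (g (cs!j)))) \<and>
    card (cs!j) = Suc (card (cs!Suc j)) \<and> card (g (cs!j)) = Suc (card (g (cs!Suc j))) \<and>
    card (cs!j) \<le> n1 \<and> card (g (cs!j)) \<le> n2"
  proof -
    fix j assume j: "Suc j < length cs"
    show "?thesis j" by (rule edge[OF iso mem mem cov[OF j]]) (use j in simp_all)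
  qed
  have c1: "card (cs!0) = card (cs!i) + i"
    by (rule card_chain[where h=card]) (use E i in auto)
  have c2: "card (g (cs!0)) = card (g (cs!i)) + i"
    by (rule card_chain[where h="\<lambda>x. card (g x)"]) (use E i in auto)
  have h0: "hd cs = cs!0" using ne by (simp add: hd_conv_nth)
  have bij: "bij_betw g ?I1 ?I2" using iso unfolding subposet_iso_def by blast
  have m0: "cs!0 \<in> ?I1" using mem ne by simp
  then have "cs!0 \<in> PP n1" unfolding pp_interval_def by blast
  then have b1: "card (cs!0) \<le> n1" by (rule pp_finite_card(2))
  have "g (cs!0) \<in> ?I2" using bij m0 by (meson bij_betwE)
  then have "g (cs!0) \<in> PP n2" unfolding pp_interval_def by blast
  then have b2: "card (g (cs!0)) \<le> n2" by (rule pp_finite_card(2))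
  have a1: "n1 - card (cs!i) = (n1 - card (hd cs)) + i" using c1 b1 h0 by simp
  have a2: "n2 - card (g (cs!i)) = (n2 - card (g (hd cs))) + i" using c2 b2 h0 by simp
  obtain m1 m2 where mm: "m1 \<in> Eset ?I1" "m2 \<in> Eset ?I1"
    "pp_label n1 (cs!i) (cs!Suc i) = (max m1 m2, m2 + (n1 - card (cs!i)))"
    "pp_label n2 (g (cs!i)) (g (cs!Suc i)) = (max (f m1) (f m2), f m2 + (n2 - card (g (cs!i))))"
    using E[OF i] by blast
  have l1: "chain_labels n1 cs ! i = pp_label n1 (cs!i) (cs!Suc i)"
    by (rule chain_labels_nth) (use i in simp)
  have l2: "chain_labels n2 (map g cs) ! i = pp_label n2 (g (cs!i)) (g (cs!Suc i))"
    using chain_labels_nth[of i "map g cs" n2] i by simp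
  show ?thesis
    using mm l1 l2 a1 a2 by (intro exI[of _ m1] exI[of _ m2]) (simp add: add.assoc)
qed

lemma lab_iff:
  fixes f :: "nat \<Rightarrow> nat"
  assumes sm: "strict_mono_on E f" and E: "a \<in> E" "b \<in> E" "a' \<in> E" "b' \<in> E"
    and j: "j = i \<or> j = Suc i"
  shows "lab_less (max a b, b + c + i) (max a' b', b' + c + j) \<longleftrightarrow>
         lab_less (max (f a) (f b), f b + d + i) (max (f a') (f b'), f b' + d + j)"
proof -
  have lt: "\<And>x y. x \<in> E \<Longrightarrow> y \<in> E \<Longrightarrow> f x < f y \<longleftrightarrow> x < y" using strict_mono_on_less[OF sm] by blast
  have le: "\<And>x y. x \<in> E \<Longrightarrow> y \<in> E \<Longrightarrow> f x \<le> f y \<longleftrightarrow> x \<le> y" using strict_mono_on_less_eq[OF sm] by blast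
  have eq: "\<And>x y. x \<in> E \<Longrightarrow> y \<in> E \<Longrightarrow> f x = f y \<longleftrightarrow> x = y" by (rule inj_on_eq_iff[OF strict_mono_on_imp_inj_on[OF sm]])
  have mx: "max (f a) (f b) = f (max a b)" "max (f a') (f b') = f (max a' b')"
    using le E by (auto simp: max_def)
  have ME: "max a b \<in> E" "max a' b' \<in> E" using E by (auto simp: max_def)
  have sn: "b + c + i < b' + c + j \<longleftrightarrow> f b + d + i < f b' + d + j"
    using j
  proof
    assume "j = i" then show ?thesis using lt[OF E(2) E(4)] by simp
  next
    assume "j = Suc i" then show ?thesis using le[OF E(2) E(4)] by (simp add: less_Suc_eq_le)
  qed
  show ?thesis unfolding lab_less_def fst_conv snd_conv mx lt[OF ME] eq[OF ME] sn ..
qed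

lemma lab_eq_iff:
  fixes f :: "nat \<Rightarrow> nat"
  assumes sm: "strict_mono_on E f" and E: "a \<in> E" "b \<in> E" "a' \<in> E" "b' \<in> E"
  shows "(max a b, b + c + i) = (max a' b', b' + c + i) \<longleftrightarrow>
         (max (f a) (f b), f b + d + i) = (max (f a') (f b'), f b' + d + i)"
proof -
  have le: "\<And>x y. x \<in> E \<Longrightarrow> y \<in> E \<Longrightarrow> f x \<le> f y \<longleftrightarrow> x \<le> y" using strict_mono_on_less_eq[OF sm] by blast
  have eq: "\<And>x y. x \<in> E \<Longrightarrow> y \<in> E \<Longrightarrow> f x = f y \<longleftrightarrow> x = y" by (rule inj_on_eq_iff[OF strict_mono_on_imp_inj_on[OF sm]])
  have mx: "max (f a) (f b) = f (max a b)" "max (f a') (f b') = f (max a' b')"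
    using le E by (auto simp: max_def)
  have ME: "max a b \<in> E" "max a' b' \<in> E" using E by (auto simp: max_def)
  show ?thesis unfolding prod.inject mx eq[OF ME] using eq[OF E(2) E(4)] by simp
qed

lemma transp_lab: "transp lab_less"
  unfolding transp_def lab_less_def by auto

theorem mainTheorem7:
  fixes n1 n2 :: nat
    and x1 y1 x2 y2 :: "(nat set \<times> nat) set"
    and g :: "(nat set \<times> nat) set \<Rightarrow> (nat set \<times> nat) set"
    and f :: "nat \<Rightarrow> nat"
  assumes "x1 \<in> PP n1" "y1 \<in> PP n1" "pp_le x1 y1"
    and "x2 \<in> PP n2" "y2 \<in> PP n2" "pp_le x2 y2"
    and "subposet_iso n1 (pp_interval n1 x1 y1) n2 (pp_interval n2 x2 y2) g f"
  shows "(\<forall>cs. sat_chain n1 (pp_interval n1 x1 y1) cs \<longrightarrow>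
            (increasing_chain n1 cs \<longrightarrow> increasing_chain n2 (map g cs)) \<and>
            (\<not> increasing_chain n1 cs \<longrightarrow> \<not> increasing_chain n2 (map g cs))) \<and>
         (\<forall>cs cs'. sat_chain n1 (pp_interval n1 x1 y1) cs \<and>
            sat_chain n1 (pp_interval n1 x1 y1) cs' \<and>
            hd cs = hd cs' \<and> last cs = last cs' \<longrightarrow>
            chain_lex_le n1 cs cs' \<longrightarrow> chain_lex_le n2 (map g cs) (map g cs'))"
proof -
  let ?I1 = "pp_interval n1 x1 y1"
  note iso = assms(7)
  have sm: "strict_mono_on (Eset ?I1) f" using iso unfolding subposet_iso_def by blast
  have part1: "increasing_chain n1 cs \<longleftrightarrow> increasing_chain n2 (map g cs)"
    if sat: "sat_chain n1 ?I1 cs" for cs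
  proof -
    define L where "L = chain_labels n1 cs"
    define G where "G = chain_labels n2 (map g cs)"
    have len: "length G = length L" unfolding L_def G_def by (simp add: chain_labels_len)
    have key: "lab_less (L!i) (L!Suc i) \<longleftrightarrow> lab_less (G!i) (G!Suc i)" if i: "Suc i < length L" for i
    proof -
      have i1: "Suc i < length cs" "Suc (Suc i) < length cs" using i unfolding L_def chain_labels_len by auto
      obtain a b where ab: "a \<in> Eset ?I1" "b \<in> Eset ?I1"
        "L ! i = (max a b, b + (n1 - card (hd cs)) + i)"
        "G ! i = (max (f a) (f b), f b + (n2 - card (g (hd cs))) + i)"
        using label_at[OF iso sat i1(1)] unfolding L_def G_def by blast
      obtain a' b' where ab': "a' \<in> Eset ?I1" "b' \<in> Eset ?I1"
        "L ! Suc i = (max a' b', b' + (n1 - card (hd cs)) + Suc i)"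
        "G ! Suc i = (max (f a') (f b'), f b' + (n2 - card (g (hd cs))) + Suc i)"
        using label_at[OF iso sat i1(2)] unfolding L_def G_def by blast
      show ?thesis unfolding ab(3,4) ab'(3,4)
        by (rule lab_iff[OF sm ab(1,2) ab'(1,2)]) simp
    qed
    have "increasing_chain n1 cs \<longleftrightarrow> (\<forall>i. Suc i < length L \<longrightarrow> lab_less (L!i) (L!Suc i))"
      unfolding increasing_chain_def L_def by (rule sorted_wrt_iff_nth_Suc_transp[OF transp_lab])
    also have "\<dots> \<longleftrightarrow> (\<forall>i. Suc i < length G \<longrightarrow> lab_less (G!i) (G!Suc i))"
      using key len by auto
    also have "\<dots> \<longleftrightarrow> increasing_chain n2 (map g cs)"
      unfolding increasing_chain_def G_def by (rule sorted_wrt_iff_nth_Suc_transp[OF transp_lab, symmetric])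
    finally show ?thesis .
  qed
  have part2: "chain_lex_le n2 (map g cs) (map g cs')"
    if sat: "sat_chain n1 ?I1 cs" and sat': "sat_chain n1 ?I1 cs'" and hd: "hd cs = hd cs'"
      and lex: "chain_lex_le n1 cs cs'" for cs cs'
  proof -
    define L where "L = chain_labels n1 cs"
    define G where "G = chain_labels n2 (map g cs)"
    define L' where "L' = chain_labels n1 cs'"
    define G' where "G' = chain_labels n2 (map g cs')"
    have len: "length G = length L" "length G' = length L'"
      unfolding L_def G_def L'_def G'_def by (simp_all add: chain_labels_len)
    have key: "(L!i = L'!i \<longleftrightarrow> G!i = G'!i) \<and> (lab_less (L!i) (L'!i) \<longleftrightarrow> lab_less (G!i) (G'!i))"
      if i: "i < length L" "i < length L'" for i
    proof -
      have i1: "Suc i < length cs" "Suc i < length cs'" using i unfolding L_def L'_def chain_labels_len by auto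
      obtain a b where ab: "a \<in> Eset ?I1" "b \<in> Eset ?I1"
        "L ! i = (max a b, b + (n1 - card (hd cs)) + i)"
        "G ! i = (max (f a) (f b), f b + (n2 - card (g (hd cs))) + i)"
        using label_at[OF iso sat i1(1)] unfolding L_def G_def by blast
      obtain a' b' where ab': "a' \<in> Eset ?I1" "b' \<in> Eset ?I1"
        "L' ! i = (max a' b', b' + (n1 - card (hd cs)) + i)"
        "G' ! i = (max (f a') (f b'), f b' + (n2 - card (g (hd cs))) + i)"
        using label_at[OF iso sat' i1(2)] unfolding L'_def G'_def hd by blast
      show ?thesis unfolding ab(3,4) ab'(3,4)
        using lab_iff[OF sm ab(1,2) ab'(1,2), of i i] lab_eq_iff[OF sm ab(1,2) ab'(1,2)] by simp
    qed
    from lex have "L = L' \<or> (\<exists>i < length L. i < length L' \<and> take i L = take i L' \<and> lab_less (L ! i) (L' ! i))"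
      unfolding chain_lex_le_def L_def L'_def Let_def .
    then have "G = G' \<or> (\<exists>i < length G. i < length G' \<and> take i G = take i G' \<and> lab_less (G ! i) (G' ! i))"
    proof
      assume LL: "L = L'"
      have "G = G'"
      proof (rule nth_equalityI)
        show "length G = length G'" using len LL by simp
        fix k assume "k < length G"
        then show "G ! k = G' ! k" using key[of k] LL len by simp
      qed
      then show ?thesis by simp
    next
      assume "\<exists>i < length L. i < length L' \<and> take i L = take i L' \<and> lab_less (L ! i) (L' ! i)"
      then obtain i where i: "i < length L" "i < length L'" "take i L = take i L'" "lab_less (L ! i) (L' ! i)"
        by blast
      have "take i G = take i G'"
      proof (rule nth_equalityI)
        show "length (take i G) = length (take i G')" using i len by simp
        fix k assume k: "k < length (take i G)"
        then have k2: "k < i" using i len by simp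
        have "take i L ! k = take i L' ! k" using i(3) by simp
        then have "L ! k = L' ! k" using k2 by simp
        then have "G ! k = G' ! k" using key[of k] k2 i(1,2) by simp
        then show "take i G ! k = take i G' ! k" using k2 by simp
      qed
      moreover have "lab_less (G ! i) (G' ! i)" using key[OF i(1,2)] i(4) by simp
      ultimately show ?thesis using i len by auto
    qed
    then show ?thesis unfolding chain_lex_le_def G_def G'_def Let_def .
  qed
  show ?thesis using part1 part2 by blast
qed

end
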